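(* Let $n\ge2$, let $\mathbb{A}=(A_{ij})_{i,j=1}^n$ be an operator matrix as in the context, and assume that for all $i\ne j$ there are constants $c_{ij},d_{ij}\ge0$ with $\|A_{ij}x_j\|_{X_i}\le c_{ij}\|A_{jj}x_j\|_{X_j}+d_{ij}\|x_j\|_{X_j}$ for all $x_j\in\mathcal{D}(A_{jj})$ and $\sum_{i=1,i\ne j}^nc_{ij}<1$ for every $j$. Then $\sigma(\mathbb{A})\subset C(\mathbb{A})$ and $\sigma(\mathbb{A})\subset\bigcap_{k=1}^nS^*_k(\mathbb{A})$.
   Context: Let $X_1,\ldots,X_n$ be complex Banach spaces and $X=X_1\times\cdots\times X_n$ with norm $\|x\|=\sum_i\|x_i\|_{X_i}$. For $i,j$, $A_{ij}:\mathcal{D}(A_{ij})\subset X_j\to X_i$ are linear, $A_{ii}$ closed, and for $i\ne j$ $\mathcal{D}(A_{jj})\subset\mathcal{D}(A_{ij})$. $\mathbb{A}=(A_{ij})$ acts on $\mathcal{D}(A_{11})\times\cdots\times\mathcal{D}(A_{nn})$ by $(\mathbb{A}x)_i=\sum_jA_{ij}x_j$. $\sigma(S)$ is the set of $\lambda$ for which $\lambda-S$ is not bijective from $\mathcal{D}(S)$ with bounded inverse. For $i\ne j$, the Cassini oval $C_{ij}(\mathbb{A}):=\sigma(A_{ii})\cup\sigma(A_{jj})\cup\widetilde C_{ij}(\mathbb{A})$, where $\widetilde C_{ij}(\mathbb{A})$ is the set of $\lambda\notin\sigma(A_{ii})\cup\sigma(A_{jj})$ with $\big(\sum_{l\ne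 i}\|A_{li}(\lambda-A_{ii})^{-1}\|\big)\big(\sum_{l\ne j}\|A_{lj}(\lambda-A_{jj})^{-1}\|\big)\ge1$, and $C(\mathbb{A}):=\bigcup_{1\le i<j\le n}C_{ij}(\mathbb{A})$. For $j\ne k$ and $\lambda\notin\sigma(A_{kk})\cup\sigma(A_{jj})$, $\mathcal{R}^*_{kj}(\lambda):=\sum_{i=1,i\ne k}^n\big(\|A_{ik}(\lambda-A_{kk})^{-1}A_{kj}(\lambda-A_{jj})^{-1}\|+\|(1-\delta_{ij})A_{ij}(\lambda-A_{jj})^{-1}\|\big)$; $S^*_{kj}(\mathbb{A}):=\sigma(A_{kk})\cup\sigma(A_{jj})\cup\{\lambda\notin\sigma(A_{kk})\cup\sigma(A_{jj}):\mathcal{R}^*_{kj}(\lambda)\ge1\}$ and $S^*_k(\mathbb{A}):=\bigcup_{j\ne k}S^*_{kj}(\mathbb{A})$. *)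

theory Defs
  imports "HOL-Analysis.Analysis"
begin

class complex_normed_vector = real_normed_vector +
  fixes scaleC :: "complex \<Rightarrow> 'a \<Rightarrow> 'a" (infixr "*\<^sub>C" 75)
  assumes scaleC_add_right: "a *\<^sub>C (x + y) = a *\<^sub>C x + a *\<^sub>C y"
    and scaleC_add_left: "(a + b) *\<^sub>C x = a *\<^sub>C x + b *\<^sub>C x"
    and scaleC_scaleC: "a *\<^sub>C (b *\<^sub>C x) = (a * b) *\<^sub>C x"
    and scaleC_one: "1 *\<^sub>C x = x"
    and scaleR_scaleC: "scaleR r x = (complex_of_real r) *\<^sub>C x"
    and norm_scaleC: "norm (a *\<^sub>C x) = cmod a * norm x"

definition csubspace :: "'a::complex_normed_vector set \<Rightarrow> bool" where
  "csubspace S \<longleftrightarrow> 0 \<in> S \<and> (\<forall>x\<in>S. \<forall>y\<in>S. x + y \<in> S) \<and> (\<forall>c. \<forall>x\<in>S. c *\<^sub>C x \<in> S)"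

text \<open>A (complex) Banach space, realised as a complete complex subspace of an ambient space.\<close>
definition banach_subspace :: "'a::complex_normed_vector set \<Rightarrow> bool" where
  "banach_subspace X \<longleftrightarrow> csubspace X \<and> complete X"

definition lin_op :: "'a::complex_normed_vector set \<Rightarrow> 'a set \<Rightarrow> 'a set \<Rightarrow> ('a \<Rightarrow> 'a) \<Rightarrow> bool" where
  "lin_op Y Z D T \<longleftrightarrow> csubspace D \<and> D \<subseteq> Y \<and> T ` D \<subseteq> Z \<and>
     (\<forall>x\<in>D. \<forall>y\<in>D. T (x + y) = T x + T y) \<and> (\<forall>c. \<forall>x\<in>D. T (c *\<^sub>C x) = c *\<^sub>C T x)"

definition closed_op :: "'a::complex_normed_vector set \<Rightarrow> ('a \<Rightarrow> 'a) \<Rightarrow> bool" where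
  "closed_op D T \<longleftrightarrow> (\<forall>s x y. (\<forall>k. s k \<in> D) \<longrightarrow> s \<longlonglongrightarrow> x \<longrightarrow> (\<lambda>k. T (s k)) \<longlonglongrightarrow> y
       \<longrightarrow> x \<in> D \<and> T x = y)"

definition bdd_invertible :: "('b \<Rightarrow> real) \<Rightarrow> 'b set \<Rightarrow> 'b set \<Rightarrow> ('b \<Rightarrow> 'b) \<Rightarrow> bool" where
  "bdd_invertible N D Y T \<longleftrightarrow> bij_betw T D Y \<and> (\<exists>C. \<forall>y\<in>Y. N (inv_into D T y) \<le> C * N y)"

definition op_spectrum :: "'a set \<Rightarrow> 'a::complex_normed_vector set \<Rightarrow> ('a \<Rightarrow> 'a) \<Rightarrow> complex set" where
  "op_spectrum Y D S = {z. \<not> bdd_invertible norm D Y (\<lambda>x. z *\<^sub>C x - S x)}"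

text \<open>Resolvent (lambda - S)^{-1} (meaningful for lambda outside the spectrum).\<close>
definition resolv :: "'a set \<Rightarrow> ('a::complex_normed_vector \<Rightarrow> 'a) \<Rightarrow> complex \<Rightarrow> 'a \<Rightarrow> 'a" where
  "resolv D S z y = (THE x. x \<in> D \<and> z *\<^sub>C x - S x = y)"

definition opnorm :: "'a::real_normed_vector set \<Rightarrow> ('a \<Rightarrow> 'b::real_normed_vector) \<Rightarrow> ennreal" where
  "opnorm Y f = (SUP y\<in>{y\<in>Y. norm y \<le> 1}. ennreal (norm (f y)))"

text \<open>The operator matrix (indices 0..n-1) on X_0 x ... x X_{n-1}, elements represented
  as functions nat => 'a vanishing from n on, with norm the sum of the component norms.\<close>
definition prod_space :: "nat \<Rightarrow> (nat \<Rightarrow> 'a::zero set) \<Rightarrow> (nat \<Rightarrow> 'a) set" where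
  "prod_space n Y = {x. (\<forall>i<n. x i \<in> Y i) \<and> (\<forall>i\<ge>n. x i = 0)}"

definition prod_norm :: "nat \<Rightarrow> (nat \<Rightarrow> 'a::real_normed_vector) \<Rightarrow> real" where
  "prod_norm n x = (\<Sum>i<n. norm (x i))"

definition matrix_spectrum :: "nat \<Rightarrow> (nat \<Rightarrow> 'a set) \<Rightarrow> (nat \<Rightarrow> nat \<Rightarrow> 'a set)
    \<Rightarrow> (nat \<Rightarrow> nat \<Rightarrow> 'a::complex_normed_vector \<Rightarrow> 'a) \<Rightarrow> complex set" where
  "matrix_spectrum n X D A = {z. \<not> bdd_invertible (prod_norm n)
      (prod_space n (\<lambda>i. D i i)) (prod_space n X)
      (\<lambda>x i. if i < n then z *\<^sub>C x i - (\<Sum>j<n. A i j (x j)) else 0)}"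

definition diag_spec :: "(nat \<Rightarrow> 'a set) \<Rightarrow> (nat \<Rightarrow> nat \<Rightarrow> 'a set)
    \<Rightarrow> (nat \<Rightarrow> nat \<Rightarrow> 'a::complex_normed_vector \<Rightarrow> 'a) \<Rightarrow> nat \<Rightarrow> complex set" where
  "diag_spec X D A i = op_spectrum (X i) (D i i) (A i i)"

definition col_sum :: "nat \<Rightarrow> (nat \<Rightarrow> 'a set) \<Rightarrow> (nat \<Rightarrow> nat \<Rightarrow> 'a set)
    \<Rightarrow> (nat \<Rightarrow> nat \<Rightarrow> 'a::complex_normed_vector \<Rightarrow> 'a) \<Rightarrow> nat \<Rightarrow> complex \<Rightarrow> ennreal" where
  "col_sum n X D A i z = (\<Sum>l\<in>{..<n} - {i}. opnorm (X i) (\<lambda>y. A l i (resolv (D i i) (A i i) z y)))"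

definition cassini :: "nat \<Rightarrow> (nat \<Rightarrow> 'a set) \<Rightarrow> (nat \<Rightarrow> nat \<Rightarrow> 'a set)
    \<Rightarrow> (nat \<Rightarrow> nat \<Rightarrow> 'a::complex_normed_vector \<Rightarrow> 'a) \<Rightarrow> nat \<Rightarrow> nat \<Rightarrow> complex set" where
  "cassini n X D A i j = diag_spec X D A i \<union> diag_spec X D A j \<union>
     {z. z \<notin> diag_spec X D A i \<union> diag_spec X D A j \<and>
          col_sum n X D A i z * col_sum n X D A j z \<ge> 1}"

definition cassini_union :: "nat \<Rightarrow> (nat \<Rightarrow> 'a set) \<Rightarrow> (nat \<Rightarrow> nat \<Rightarrow> 'a set)
    \<Rightarrow> (nat \<Rightarrow> nat \<Rightarrow> 'a::complex_normed_vector \<Rightarrow> 'a) \<Rightarrow> complex set" where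
  "cassini_union n X D A = (\<Union>i<n. \<Union>j\<in>{i<..<n}. cassini n X D A i j)"

definition Rstar :: "nat \<Rightarrow> (nat \<Rightarrow> 'a set) \<Rightarrow> (nat \<Rightarrow> nat \<Rightarrow> 'a set)
    \<Rightarrow> (nat \<Rightarrow> nat \<Rightarrow> 'a::complex_normed_vector \<Rightarrow> 'a) \<Rightarrow> nat \<Rightarrow> nat \<Rightarrow> complex \<Rightarrow> ennreal" where
  "Rstar n X D A k j z = (\<Sum>i\<in>{..<n} - {k}.
      opnorm (X j) (\<lambda>y. A i k (resolv (D k k) (A k k) z (A k j (resolv (D j j) (A j j) z y))))
    + (if i = j then 0 else opnorm (X j) (\<lambda>y. A i j (resolv (D j j) (A j j) z y))))"

definition Sstar2 :: "nat \<Rightarrow> (nat \<Rightarrow> 'a set) \<Rightarrow> (nat \<Rightarrow> nat \<Rightarrow> 'a set)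
    \<Rightarrow> (nat \<Rightarrow> nat \<Rightarrow> 'a::complex_normed_vector \<Rightarrow> 'a) \<Rightarrow> nat \<Rightarrow> nat \<Rightarrow> complex set" where
  "Sstar2 n X D A k j = diag_spec X D A k \<union> diag_spec X D A j \<union>
     {z. z \<notin> diag_spec X D A k \<union> diag_spec X D A j \<and> Rstar n X D A k j z \<ge> 1}"

definition Sstar :: "nat \<Rightarrow> (nat \<Rightarrow> 'a set) \<Rightarrow> (nat \<Rightarrow> nat \<Rightarrow> 'a set)
    \<Rightarrow> (nat \<Rightarrow> nat \<Rightarrow> 'a::complex_normed_vector \<Rightarrow> 'a) \<Rightarrow> nat \<Rightarrow> complex set" where
  "Sstar n X D A k = (\<Union>j\<in>{..<n} - {k}. Sstar2 n X D A k j)"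

end

theory Submission
  imports Defs
begin

lemma scaleC_zero_right[simp]: "a *\<^sub>C (0::'a::complex_normed_vector) = 0"
proof -
  have "a *\<^sub>C (0::'a) = a *\<^sub>C (0 + 0)" by simp
  also have "\<dots> = a *\<^sub>C 0 + a *\<^sub>C 0" by (rule scaleC_add_right)
  finally show ?thesis by simp
qed

lemma scaleC_minus_right: "a *\<^sub>C (- x::'a::complex_normed_vector) = - (a *\<^sub>C x)"
proof -
  have "a *\<^sub>C (- x) + a *\<^sub>C x = 0" by (metis scaleC_add_right scaleC_zero_right add.left_inverse)
  thus ?thesis by (simp add: eq_neg_iff_add_eq_0)
qed

lemma scaleC_diff_right: "a *\<^sub>C (x - y::'a::complex_normed_vector) = a *\<^sub>C x - a *\<^sub>C y"
  by (metis diff_conv_add_uminus scaleC_add_right scaleC_minus_right)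

lemma scaleC_left_commute: "a *\<^sub>C (b *\<^sub>C (x::'a::complex_normed_vector)) = b *\<^sub>C (a *\<^sub>C x)"
  by (metis scaleC_scaleC mult.commute)

lemma csub_0: "csubspace S \<Longrightarrow> 0 \<in> S" by (simp add: csubspace_def)
lemma csub_add: "csubspace S \<Longrightarrow> x \<in> S \<Longrightarrow> y \<in> S \<Longrightarrow> x + y \<in> S" by (simp add: csubspace_def)
lemma csub_scaleC: "csubspace S \<Longrightarrow> x \<in> S \<Longrightarrow> c *\<^sub>C x \<in> S" by (simp add: csubspace_def)
lemma csub_scaleR: "csubspace S \<Longrightarrow> x \<in> S \<Longrightarrow> r *\<^sub>R x \<in> S" by (simp add: csubspace_def scaleR_scaleC)
lemma csub_uminus: "csubspace S \<Longrightarrow> x \<in> S \<Longrightarrow> - x \<in> S"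
  using csub_scaleR[of S x "-1"] by simp
lemma csub_diff: "csubspace S \<Longrightarrow> x \<in> S \<Longrightarrow> y \<in> S \<Longrightarrow> x - y \<in> S"
  by (metis csub_add csub_uminus diff_conv_add_uminus)
lemma csub_sum: "csubspace S \<Longrightarrow> (\<forall>j\<in>J. g j \<in> S) \<Longrightarrow> sum g J \<in> S"
  by (induction J rule: infinite_finite_induct) (auto simp: csub_0 csub_add)

lemma add_0: fixes f :: "'a::complex_normed_vector \<Rightarrow> 'b::ab_group_add" assumes "csubspace S" "\<forall>x\<in>S. \<forall>y\<in>S. f (x + y) = f x + f y" shows "f 0 = 0"
proof -
  have "f (0 + 0) = f 0 + f 0" using assms(2) csub_0[OF assms(1)] by blast
  thus ?thesis by simp
qed

lemma add_diff: fixes f :: "'a::complex_normed_vector \<Rightarrow> 'b::ab_group_add" assumes "csubspace S" "\<forall>x\<in>S. \<forall>y\<in>S. f (x + y) = f x + f y" "x \<in> S" "y \<in> S"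
  shows "f (x - y) = f x - f y"
proof -
  have "f (x - y + y) = f (x - y) + f y" using assms csub_diff by blast
  thus ?thesis by simp
qed

lemma add_sum: fixes f :: "'a::complex_normed_vector \<Rightarrow> 'b::ab_group_add" assumes "csubspace S" "\<forall>x\<in>S. \<forall>y\<in>S. f (x + y) = f x + f y" "\<forall>j\<in>J. g j \<in> S"
  shows "f (sum g J) = (\<Sum>j\<in>J. f (g j))"
  using assms(3)
proof (induction J rule: infinite_finite_induct)
  case (insert x F)
  then show ?case using assms(1,2) csub_sum[OF assms(1), of F g] by simp
qed (use add_0[OF assms(1,2)] in auto)

lemma opnorm_le: assumes "M \<ge> 0" "\<forall>y\<in>Y. norm (f y) \<le> M * norm y" shows "opnorm Y f \<le> ennreal M"
  unfolding opnorm_def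
proof (rule SUP_least)
  fix y assume "y \<in> {y \<in> Y. norm y \<le> 1}"
  hence "norm (f y) \<le> M" using assms by (smt (verit) mem_Collect_eq mult_left_le norm_ge_zero)
  thus "ennreal (norm (f y)) \<le> ennreal M" by (rule ennreal_leI)
qed

lemma opnorm_bound:
  assumes S: "csubspace Y" and add: "\<forall>x\<in>Y. \<forall>y\<in>Y. f (x + y) = f x + f y"
    and hom: "\<forall>c. \<forall>x\<in>Y. f (c *\<^sub>C x) = c *\<^sub>C f x"
    and fin: "opnorm Y f < top" and y: "y \<in> Y"
  shows "norm (f y) \<le> enn2real (opnorm Y f) * norm y"
proof (cases "y = 0")
  case True then show ?thesis using add_0[OF S add] by simp
next
  case False
  define y' where "y' = complex_of_real (1 / norm y) *\<^sub>C y"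
  have y'Y: "y' \<in> Y" using S y by (simp add: y'_def csub_scaleC)
  have ny': "norm y' = 1" using False by (simp add: y'_def norm_scaleC norm_divide)
  have "ennreal (norm (f y')) \<le> opnorm Y f" unfolding opnorm_def
    by (rule SUP_upper) (use y'Y ny' in auto)
  also have "\<dots> = ennreal (enn2real (opnorm Y f))" using fin by (simp add: ennreal_enn2real)
  finally have "norm (f y') \<le> enn2real (opnorm Y f)" by (simp add: ennreal_le_iff)
  moreover have "norm (f y') = norm (f y) / norm y"
    using hom y False by (simp add: y'_def norm_scaleC norm_divide)
  ultimately show ?thesis using False by (simp add: divide_le_eq mult.commute)
qed

primrec iter :: "nat set \<Rightarrow> (nat \<Rightarrow> nat \<Rightarrow> 'a \<Rightarrow> 'a) \<Rightarrow> (nat \<Rightarrow> 'a::comm_monoid_add) \<Rightarrow> nat \<Rightarrow> nat \<Rightarrow> 'a" where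
  "iter I K y 0 = y"
| "iter I K y (Suc m) = (\<lambda>i. y i + (\<Sum>j\<in>I. K i j (iter I K y m j)))"

locale contr =
  fixes I :: "nat set" and X :: "nat \<Rightarrow> 'a::complex_normed_vector set" and K :: "nat \<Rightarrow> nat \<Rightarrow> 'a \<Rightarrow> 'a"
    and b :: "nat \<Rightarrow> nat \<Rightarrow> real" and w :: "nat \<Rightarrow> real" and q :: real
  assumes fin: "finite I" and Xs: "\<And>i. i\<in>I \<Longrightarrow> csubspace (X i)" and Xc: "\<And>i. i\<in>I \<Longrightarrow> complete (X i)"
    and Kmap: "\<And>i j v. i\<in>I \<Longrightarrow> j\<in>I \<Longrightarrow> v\<in>X j \<Longrightarrow> K i j v \<in> X i"
    and Kadd: "\<And>i j. i\<in>I \<Longrightarrow> j\<in>I \<Longrightarrow> \<forall>v\<in>X j. \<forall>v'\<in>X j. K i j (v + v') = K i j v + K i j v'"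
    and Kb: "\<And>i j v. i\<in>I \<Longrightarrow> j\<in>I \<Longrightarrow> v\<in>X j \<Longrightarrow> norm (K i j v) \<le> b i j * norm v"
    and w1: "\<And>i. i\<in>I \<Longrightarrow> w i \<ge> 1"
    and col: "\<And>j. j\<in>I \<Longrightarrow> (\<Sum>i\<in>I. w i * b i j) \<le> q * w j"
    and q0: "0 \<le> q" and q1: "q < 1"
begin

definition N where "N v = (\<Sum>i\<in>I. w i * norm (v i))"

lemma w0: "i \<in> I \<Longrightarrow> 0 \<le> w i" using w1 by (meson order_trans zero_le_one)

lemma N_nonneg: "N v \<ge> 0" by (auto simp: N_def intro!: sum_nonneg mult_nonneg_nonneg w0)

lemma N_cong: "(\<And>i. i \<in> I \<Longrightarrow> v i = v' i) \<Longrightarrow> N v = N v'"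
  unfolding N_def by (rule sum.cong) auto

lemma N_comp: "i \<in> I \<Longrightarrow> norm (v i) \<le> N v"
proof -
  assume i: "i \<in> I"
  have "norm (v i) \<le> w i * norm (v i)" using w1[OF i] by (simp add: mult_le_cancel_right1)
  also have "\<dots> \<le> N v" unfolding N_def
    by (rule member_le_sum) (use i fin in \<open>auto intro: mult_nonneg_nonneg w0\<close>)
  finally show ?thesis .
qed

lemma Kdiff: "i\<in>I \<Longrightarrow> j\<in>I \<Longrightarrow> v\<in>X j \<Longrightarrow> v'\<in>X j \<Longrightarrow> K i j (v - v') = K i j v - K i j v'"
  by (rule add_diff[OF Xs Kadd]) auto

lemma key: assumes "\<forall>j\<in>I. v j \<in> X j" shows "N (\<lambda>i. \<Sum>j\<in>I. K i j (v j)) \<le> q * N v"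
proof -
  have "N (\<lambda>i. \<Sum>j\<in>I. K i j (v j)) \<le> (\<Sum>i\<in>I. w i * (\<Sum>j\<in>I. b i j * norm (v j)))"
    unfolding N_def
  proof (rule sum_mono)
    fix i assume i: "i\<in>I"
    have "norm (\<Sum>j\<in>I. K i j (v j)) \<le> (\<Sum>j\<in>I. norm (K i j (v j)))" by (rule norm_sum)
    also have "\<dots> \<le> (\<Sum>j\<in>I. b i j * norm (v j))" using Kb i assms by (intro sum_mono) auto
    finally show "w i * norm (\<Sum>j\<in>I. K i j (v j)) \<le> w i * (\<Sum>j\<in>I. b i j * norm (v j))"
      using w1[OF i] by (intro mult_left_mono) auto
  qed
  also have "\<dots> = (\<Sum>i\<in>I. \<Sum>j\<in>I. w i * b i j * norm (v j))"
    by (simp add: sum_distrib_left mult.assoc)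
  also have "\<dots> = (\<Sum>j\<in>I. \<Sum>i\<in>I. w i * b i j * norm (v j))"
    by (rule sum.swap)
  also have "\<dots> = (\<Sum>j\<in>I. (\<Sum>i\<in>I. w i * b i j) * norm (v j))"
    by (simp add: sum_distrib_right)
  also have "\<dots> \<le> (\<Sum>j\<in>I. q * w j * norm (v j))"
    using col by (intro sum_mono mult_right_mono) auto
  also have "\<dots> = q * N v" by (simp add: N_def sum_distrib_left mult.assoc)
  finally show ?thesis .
qed

lemma unique:
  assumes u: "\<forall>i\<in>I. u i \<in> X i" and u': "\<forall>i\<in>I. u' i \<in> X i"
    and eu: "\<forall>i\<in>I. u i = y i + (\<Sum>j\<in>I. K i j (u j))"
    and eu': "\<forall>i\<in>I. u' i = y i + (\<Sum>j\<in>I. K i j (u' j))"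
  shows "\<forall>i\<in>I. u i = u' i"
proof -
  define v where "v = (\<lambda>i. u i - u' i)"
  have vX: "\<forall>j\<in>I. v j \<in> X j" using u u' by (auto simp: v_def intro!: csub_diff Xs)
  have vi: "v i = (\<Sum>j\<in>I. K i j (v j))" if i: "i \<in> I" for i
  proof -
    have "v i = (\<Sum>j\<in>I. K i j (u j)) - (\<Sum>j\<in>I. K i j (u' j))"
      using eu eu' i by (simp add: v_def)
    also have "\<dots> = (\<Sum>j\<in>I. K i j (u j) - K i j (u' j))" by (simp add: sum_subtractf)
    also have "\<dots> = (\<Sum>j\<in>I. K i j (v j))" using Kdiff i u u' by (auto simp: v_def intro!: sum.cong)
    finally show ?thesis .
  qed
  have "N v = N (\<lambda>i. \<Sum>j\<in>I. K i j (v j))" by (rule N_cong) (use vi in auto)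
  also have "\<dots> \<le> q * N v" by (rule key[OF vX])
  finally have "N v \<le> q * N v" .
  hence "N v \<le> 0" using q1 N_nonneg[of v]
    by (smt (verit) mult_le_cancel_right1)
  hence N0: "N v = 0" using N_nonneg[of v] by simp
  have "\<forall>i\<in>I. w i * norm (v i) = 0"
    using N0 unfolding N_def by (subst (asm) sum_nonneg_eq_0_iff) (use fin in \<open>auto intro: mult_nonneg_nonneg w0\<close>)
  thus ?thesis using w1 by (force simp: v_def)
qed

context
  fixes y assumes yX: "\<forall>i\<in>I. y i \<in> X i"
begin

abbreviation it where "it \<equiv> iter I K y"

lemma it_in: "i \<in> I \<Longrightarrow> it m i \<in> X i"
proof (induction m arbitrary: i)
  case 0 then show ?case using yX by simp
next
  case (Suc m)
  then show ?case using yX Kmap Xs by (auto intro!: csub_add csub_sum)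
qed

definition del where "del m = (\<lambda>i. it (Suc m) i - it m i)"

lemma del_in: "i \<in> I \<Longrightarrow> del m i \<in> X i"
  unfolding del_def by (rule csub_diff[OF Xs it_in it_in])

lemma del_Suc: "i \<in> I \<Longrightarrow> del (Suc m) i = (\<Sum>j\<in>I. K i j (del m j))"
proof -
  assume i: "i \<in> I"
  have "del (Suc m) i = (\<Sum>j\<in>I. K i j (it (Suc m) j)) - (\<Sum>j\<in>I. K i j (it m j))"
    by (simp add: del_def)
  also have "\<dots> = (\<Sum>j\<in>I. K i j (it (Suc m) j) - K i j (it m j))" by (simp add: sum_subtractf)
  also have "\<dots> = (\<Sum>j\<in>I. K i j (del m j))"
  proof (rule sum.cong[OF refl])
    fix j assume j: "j \<in> I"
    show "K i j (it (Suc m) j) - K i j (it m j) = K i j (del m j)"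
      unfolding del_def by (rule Kdiff[OF i j it_in[OF j] it_in[OF j], symmetric])
  qed
  finally show ?thesis .
qed

definition E where "E = N (del 0)"

lemma E_nonneg: "E \<ge> 0" by (simp add: E_def N_nonneg)

lemma N_del: "N (del m) \<le> q ^ m * E"
proof (induction m)
  case 0 then show ?case by (simp add: E_def)
next
  case (Suc m)
  have "N (del (Suc m)) = N (\<lambda>i. \<Sum>j\<in>I. K i j (del m j))" by (rule N_cong) (simp add: del_Suc)
  also have "\<dots> \<le> q * N (del m)" by (rule key) (simp add: del_in)
  also have "\<dots> \<le> q * (q ^ m * E)" using Suc q0 by (intro mult_left_mono) auto
  finally show ?case by simp
qed

lemma del_comp: "i \<in> I \<Longrightarrow> norm (del m i) \<le> q ^ m * E"
  using N_comp N_del order_trans by blast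

lemma dist_it: "i \<in> I \<Longrightarrow> norm (it (m + p) i - it m i) \<le> E * (q ^ m - q ^ (m + p)) / (1 - q)"
proof (induction p)
  case 0 then show ?case by simp
next
  case (Suc p)
  have "it (m + Suc p) i - it m i = del (m + p) i + (it (m + p) i - it m i)"
    unfolding del_def add_Suc_right by (simp del: iter.simps add: algebra_simps)
  hence "norm (it (m + Suc p) i - it m i) \<le> norm (del (m + p) i) + norm (it (m + p) i - it m i)"
    by (metis norm_triangle_ineq)
  also have "\<dots> \<le> q ^ (m + p) * E + E * (q ^ m - q ^ (m + p)) / (1 - q)"
    using Suc del_comp by (intro add_mono) auto
  also have "\<dots> = E * (q ^ m - q ^ (m + Suc p)) / (1 - q)"
    using q1 by (simp add: field_simps)
  finally show ?case .
qed

lemma dist_it2: "i \<in> I \<Longrightarrow> m \<le> m' \<Longrightarrow> norm (it m' i - it m i) \<le> E * q ^ m / (1 - q)"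
proof -
  assume i: "i \<in> I" and mm: "m \<le> m'"
  then obtain p where p: "m' = m + p" using le_Suc_ex by blast
  have "norm (it m' i - it m i) \<le> E * (q ^ m - q ^ (m + p)) / (1 - q)" using dist_it i p by simp
  also have "\<dots> \<le> E * q ^ m / (1 - q)" using q0 q1 E_nonneg
    by (intro divide_right_mono mult_left_mono) auto
  finally show ?thesis .
qed

lemma it_Cauchy: "i \<in> I \<Longrightarrow> Cauchy (\<lambda>m. it m i)"
proof (rule metric_CauchyI)
  fix e :: real assume i: "i \<in> I" and e: "0 < e"
  have "0 < e * (1 - q) / (E + 1)" using e q1 E_nonneg by simp
  then obtain M where M: "q ^ M < e * (1 - q) / (E + 1)" using real_arch_pow_inv q1 by blast
  have "E * q ^ M / (1 - q) < e"
  proof -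
    have "E * q ^ M \<le> E * (e * (1 - q) / (E + 1))" using M E_nonneg by (intro mult_left_mono) auto
    also have "\<dots> < e * (1 - q)" using E_nonneg e q1 by (simp add: field_simps)
    finally show ?thesis using q1 by (simp add: field_simps)
  qed
  have bnd: "dist (it m i) (it m' i) < e" if "M \<le> m" "m \<le> m'" for m m'
  proof -
    have "dist (it m i) (it m' i) = norm (it m' i - it m i)" by (simp add: dist_norm norm_minus_commute)
    also have "\<dots> \<le> E * q ^ m / (1 - q)" using dist_it2 i that by simp
    also have "\<dots> \<le> E * q ^ M / (1 - q)" using q0 q1 E_nonneg that
      by (intro divide_right_mono mult_left_mono power_decreasing) auto
    finally show ?thesis using \<open>E * q ^ M / (1 - q) < e\<close> by simp
  qed
  show "\<exists>M. \<forall>m\<ge>M. \<forall>n\<ge>M. dist (it m i) (it n i) < e"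
  proof (intro exI allI impI)
    fix m n assume "M \<le> m" "M \<le> n"
    show "dist (it m i) (it n i) < e"
    proof (cases "m \<le> n")
      case True then show ?thesis using bnd \<open>M \<le> m\<close> by simp
    next
      case False then show ?thesis using bnd[of n m] \<open>M \<le> n\<close> by (simp add: dist_commute)
    qed
  qed
qed

definition L where "L i = (SOME l. l \<in> X i \<and> (\<lambda>m. it m i) \<longlonglongrightarrow> l)"

lemma L_prop: "i \<in> I \<Longrightarrow> L i \<in> X i \<and> (\<lambda>m. it m i) \<longlonglongrightarrow> L i"
proof -
  assume i: "i \<in> I"
  have "\<exists>l\<in>X i. (\<lambda>m. it m i) \<longlonglongrightarrow> l"
    by (rule complete_def[THEN iffD1, OF Xc[OF i], rule_format]) (use it_Cauchy[OF i] it_in[OF i] in auto)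
  then show ?thesis unfolding L_def by (metis (mono_tags, lifting) someI_ex)
qed

lemma L_eq: "i \<in> I \<Longrightarrow> L i = y i + (\<Sum>j\<in>I. K i j (L j))"
proof -
  assume i: "i \<in> I"
  have Kt: "(\<lambda>m. K i j (it m j)) \<longlonglongrightarrow> K i j (L j)" if j: "j \<in> I" for j
  proof -
    have "(\<lambda>m. K i j (it m j) - K i j (L j)) \<longlonglongrightarrow> 0"
    proof (rule Lim_null_comparison)
      show "\<forall>\<^sub>F m in sequentially. norm (K i j (it m j) - K i j (L j)) \<le> b i j * norm (it m j - L j)"
      proof (intro always_eventually allI)
        fix m
        have "K i j (it m j) - K i j (L j) = K i j (it m j - L j)"
          by (rule Kdiff[OF i j it_in[OF j], symmetric]) (use L_prop[OF j] in auto)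
        also have "norm \<dots> \<le> b i j * norm (it m j - L j)"
          by (rule Kb[OF i j csub_diff[OF Xs[OF j] it_in[OF j]]]) (use L_prop[OF j] in auto)
        finally show "norm (K i j (it m j) - K i j (L j)) \<le> b i j * norm (it m j - L j)" .
      qed
      have "(\<lambda>m. it m j - L j) \<longlonglongrightarrow> 0" using conjunct2[OF L_prop[OF j]] by (rule LIM_zero)
      hence "(\<lambda>m. norm (it m j - L j)) \<longlonglongrightarrow> 0" by (rule tendsto_norm_zero)
      thus "(\<lambda>m. b i j * norm (it m j - L j)) \<longlonglongrightarrow> 0" by (rule tendsto_mult_right_zero)
    qed
    thus ?thesis by (rule LIM_zero_cancel)
  qed
  have "(\<lambda>m. it (Suc m) i) \<longlonglongrightarrow> y i + (\<Sum>j\<in>I. K i j (L j))"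
    unfolding iter.simps by (intro tendsto_add tendsto_const tendsto_sum Kt)
  moreover have "(\<lambda>m. it (Suc m) i) \<longlonglongrightarrow> L i" using conjunct2[OF L_prop[OF i]] by (rule LIMSEQ_Suc)
  ultimately show ?thesis using LIMSEQ_unique by blast
qed

lemma L_bound: "N L \<le> N y / (1 - q)"
proof -
  have LX: "\<forall>j\<in>I. L j \<in> X j" using L_prop by blast
  have "N L = N (\<lambda>i. y i + (\<Sum>j\<in>I. K i j (L j)))" by (rule N_cong) (simp add: L_eq)
  also have "\<dots> \<le> N y + N (\<lambda>i. \<Sum>j\<in>I. K i j (L j))"
    unfolding N_def sum.distrib[symmetric] distrib_left[symmetric]
    by (intro sum_mono mult_left_mono norm_triangle_ineq w0) auto
  also have "\<dots> \<le> N y + q * N L" using key[OF LX] by simp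
  finally have "(1 - q) * N L \<le> N y" by (simp add: algebra_simps)
  thus ?thesis using q1 by (simp add: field_simps)
qed

end

lemma solve:
  "\<exists>C\<ge>0. \<forall>y. (\<forall>i\<in>I. y i \<in> X i) \<longrightarrow> (\<exists>u. (\<forall>i\<in>I. u i \<in> X i) \<and>
      (\<forall>i\<in>I. u i = y i + (\<Sum>j\<in>I. K i j (u j))) \<and> (\<Sum>i\<in>I. norm (u i)) \<le> C * (\<Sum>i\<in>I. norm (y i)))"
proof -
  define W where "W = (\<Sum>i\<in>I. w i)"
  have W0: "W \<ge> 0" by (auto simp: W_def intro!: sum_nonneg w0)
  have C0: "W / (1 - q) \<ge> 0" using W0 q1 by simp
  have "\<exists>u. (\<forall>i\<in>I. u i \<in> X i) \<and> (\<forall>i\<in>I. u i = y i + (\<Sum>j\<in>I. K i j (u j))) \<and>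
      (\<Sum>i\<in>I. norm (u i)) \<le> W / (1 - q) * (\<Sum>i\<in>I. norm (y i))"
    if yX: "\<forall>i\<in>I. y i \<in> X i" for y
  proof (intro exI conjI)
    show "\<forall>i\<in>I. L y i \<in> X i" using L_prop[OF yX] by blast
    show "\<forall>i\<in>I. L y i = y i + (\<Sum>j\<in>I. K i j (L y j))" using L_eq[OF yX] by blast
    have Ny: "N y \<le> W * (\<Sum>i\<in>I. norm (y i))" unfolding N_def sum_distrib_left
    proof (rule sum_mono)
      fix i assume i: "i \<in> I"
      have "w i \<le> W" unfolding W_def by (rule member_le_sum) (use fin w0 i in auto)
      thus "w i * norm (y i) \<le> W * norm (y i)" by (rule mult_right_mono) simp
    qed
    have "(\<Sum>i\<in>I. norm (L y i)) \<le> N (L y)" unfolding N_def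
      using w1 by (intro sum_mono) (simp add: mult_le_cancel_right1)
    also have "\<dots> \<le> N y / (1 - q)" by (rule L_bound[OF yX])
    also have "\<dots> \<le> W * (\<Sum>i\<in>I. norm (y i)) / (1 - q)" using q1 Ny by (intro divide_right_mono) auto
    finally show "(\<Sum>i\<in>I. norm (L y i)) \<le> W / (1 - q) * (\<Sum>i\<in>I. norm (y i))" by simp
  qed
  with C0 show ?thesis by blast
qed

end

definition solv :: "nat \<Rightarrow> (nat \<Rightarrow> 'a::complex_normed_vector set) \<Rightarrow> (nat \<Rightarrow> nat \<Rightarrow> 'a \<Rightarrow> 'a) \<Rightarrow> bool" where
"solv n X K \<longleftrightarrow> (\<exists>C. \<forall>y. (\<forall>i<n. y i \<in> X i) \<longrightarrow> (\<exists>u. (\<forall>i<n. u i \<in> X i) \<and>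
     (\<forall>i<n. u i = y i + (\<Sum>j<n. K i j (u j))) \<and> (\<Sum>i<n. norm (u i)) \<le> C * (\<Sum>i<n. norm (y i)))) \<and>
 (\<forall>y u u'. (\<forall>i<n. u i \<in> X i) \<longrightarrow> (\<forall>i<n. u' i \<in> X i) \<longrightarrow> (\<forall>i<n. u i = y i + (\<Sum>j<n. K i j (u j)))
    \<longrightarrow> (\<forall>i<n. u' i = y i + (\<Sum>j<n. K i j (u' j))) \<longrightarrow> (\<forall>i<n. u i = u' i))"

lemma contr_solv: assumes "contr {..<n} X K b w q" shows "solv n X K"
proof -
  interpret contr "{..<n}" X K b w q by fact
  show ?thesis unfolding solv_def
  proof (intro conjI)
    show "\<exists>C. \<forall>y. (\<forall>i<n. y i \<in> X i) \<longrightarrow> (\<exists>u. (\<forall>i<n. u i \<in> X i) \<and>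
     (\<forall>i<n. u i = y i + (\<Sum>j<n. K i j (u j))) \<and> (\<Sum>i<n. norm (u i)) \<le> C * (\<Sum>i<n. norm (y i)))"
      using solve unfolding Ball_def lessThan_iff by blast
    show "\<forall>y u u'. (\<forall>i<n. u i \<in> X i) \<longrightarrow> (\<forall>i<n. u' i \<in> X i) \<longrightarrow> (\<forall>i<n. u i = y i + (\<Sum>j<n. K i j (u j)))
    \<longrightarrow> (\<forall>i<n. u' i = y i + (\<Sum>j<n. K i j (u' j))) \<longrightarrow> (\<forall>i<n. u i = u' i)"
      using unique by auto
  qed
qed

lemma max_q:
  fixes f :: "nat \<Rightarrow> real"
  assumes "finite I" "\<And>j. j \<in> I \<Longrightarrow> f j < 1"
  shows "\<exists>q. 0 \<le> q \<and> q < 1 \<and> (\<forall>j\<in>I. f j \<le> q)"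
proof (intro exI conjI ballI)
  let ?q = "Max (insert 0 (f ` I))"
  show "0 \<le> ?q" using assms by simp
  show "?q < 1" using assms by (subst Max_less_iff) auto
  show "f j \<le> ?q" if "j \<in> I" for j using assms that by (intro Max_ge) auto
qed

lemma sum_split_k: "(k::nat) < n \<Longrightarrow> (\<Sum>j<n. f j) = f k + (\<Sum>j\<in>{..<n}-{k}. f j)"
  by (rule sum.remove) auto

lemma elim_solv:
  fixes X :: "nat \<Rightarrow> 'a::complex_normed_vector set" and K :: "nat \<Rightarrow> nat \<Rightarrow> 'a \<Rightarrow> 'a"
  assumes k: "k < n"
    and Xs: "\<And>i. i<n \<Longrightarrow> csubspace (X i)" and Xc: "\<And>i. i<n \<Longrightarrow> complete (X i)"
    and Kmap: "\<And>i j v. i<n \<Longrightarrow> j<n \<Longrightarrow> v\<in>X j \<Longrightarrow> K i j v \<in> X i"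
    and Kadd: "\<And>i j. i<n \<Longrightarrow> j<n \<Longrightarrow> \<forall>v\<in>X j. \<forall>v'\<in>X j. K i j (v + v') = K i j v + K i j v'"
    and B0: "B \<ge> 0"
    and Kb: "\<And>i j v. i<n \<Longrightarrow> j<n \<Longrightarrow> v\<in>X j \<Longrightarrow> norm (K i j v) \<le> B * norm v"
    and Kii: "\<And>i v. K i i v = 0"
    and Mb: "\<And>i j v. i \<in> {..<n}-{k} \<Longrightarrow> j \<in> {..<n}-{k} \<Longrightarrow> v\<in>X j \<Longrightarrow>
              norm (K i k (K k j v) + K i j v) \<le> bm i j * norm v"
    and Mcol: "\<And>j. j \<in> {..<n}-{k} \<Longrightarrow> (\<Sum>i\<in>{..<n}-{k}. bm i j) < 1"
  shows "solv n X K"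
proof -
  define I where "I = {..<n} - {k}"
  have finI: "finite I" by (simp add: I_def)
  have In: "\<And>i. i \<in> I \<Longrightarrow> i < n" by (simp add: I_def)
  have kI: "k \<notin> I" by (simp add: I_def)
  define M where "M = (\<lambda>i j v. K i k (K k j v) + K i j v)"
  obtain q where q: "0 \<le> q" "q < 1" "\<forall>j\<in>I. (\<Sum>i\<in>I. bm i j) \<le> q"
    using max_q[OF finI, of "\<lambda>j. \<Sum>i\<in>I. bm i j"] Mcol by (auto simp: I_def)
  interpret C: contr I X M bm "\<lambda>_. 1" q
  proof
    show "finite I" by fact
    show "\<And>i. i \<in> I \<Longrightarrow> csubspace (X i)" "\<And>i. i \<in> I \<Longrightarrow> complete (X i)" using Xs Xc In by auto
    show "\<And>i j v. i \<in> I \<Longrightarrow> j \<in> I \<Longrightarrow> v \<in> X j \<Longrightarrow> M i j v \<in> X i"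
      unfolding M_def using In Kmap k Xs by (auto intro!: csub_add)
    show "\<And>i j. i \<in> I \<Longrightarrow> j \<in> I \<Longrightarrow> \<forall>v\<in>X j. \<forall>v'\<in>X j. M i j (v + v') = M i j v + M i j v'"
    proof (intro ballI)
      fix i j v v' assume i: "i \<in> I" and j: "j \<in> I" and v: "v \<in> X j" and v': "v' \<in> X j"
      have 1: "K k j (v + v') = K k j v + K k j v'" using Kadd[OF k In[OF j]] v v' by blast
      have 2: "K i k (K k j v + K k j v') = K i k (K k j v) + K i k (K k j v')"
        using Kadd[OF In[OF i] k] Kmap[OF k In[OF j]] v v' by blast
      have 3: "K i j (v + v') = K i j v + K i j v'" using Kadd[OF In[OF i] In[OF j]] v v' by blast
      show "M i j (v + v') = M i j v + M i j v'" unfolding M_def 1 2 3 by (simp add: ac_simps)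
    qed
    show "\<And>i j v. i \<in> I \<Longrightarrow> j \<in> I \<Longrightarrow> v \<in> X j \<Longrightarrow> norm (M i j v) \<le> bm i j * norm v"
      unfolding M_def using Mb by (auto simp: I_def)
    show "\<And>i. i \<in> I \<Longrightarrow> 1 \<le> (1::real)" by simp
    show "\<And>j. j \<in> I \<Longrightarrow> (\<Sum>i\<in>I. 1 * bm i j) \<le> q * 1" using q by simp
    show "0 \<le> q" "q < 1" by fact+
  qed
  obtain C where C0: "C \<ge> 0" and Csol: "\<And>y. \<forall>i\<in>I. y i \<in> X i \<Longrightarrow> \<exists>u. (\<forall>i\<in>I. u i \<in> X i) \<and>
      (\<forall>i\<in>I. u i = y i + (\<Sum>j\<in>I. M i j (u j))) \<and> (\<Sum>i\<in>I. norm (u i)) \<le> C * (\<Sum>i\<in>I. norm (y i))"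
    using C.solve by blast
  have split: "(\<Sum>j<n. f j) = f k + (\<Sum>j\<in>I. f j)" for f :: "nat \<Rightarrow> 'a"
    unfolding I_def by (rule sum_split_k[OF k])
  have splitr: "(\<Sum>j<n. f j) = f k + (\<Sum>j\<in>I. f j)" for f :: "nat \<Rightarrow> real"
    unfolding I_def by (rule sum_split_k[OF k])
  have reduce: "\<forall>i\<in>I. u i = (y i + K i k (y k)) + (\<Sum>j\<in>I. M i j (u j))"
    and ukeq: "u k = y k + (\<Sum>j\<in>I. K k j (u j))"
    if uX: "\<forall>i<n. u i \<in> X i" and ue: "\<forall>i<n. u i = y i + (\<Sum>j<n. K i j (u j))" for u y
  proof -
    show uk: "u k = y k + (\<Sum>j\<in>I. K k j (u j))" using ue k split[of "\<lambda>j. K k j (u j)"] Kii by simp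
    show "\<forall>i\<in>I. u i = (y i + K i k (y k)) + (\<Sum>j\<in>I. M i j (u j))"
    proof
      fix i assume i: "i \<in> I"
      have SX: "(\<Sum>j\<in>I. K k j (u j)) \<in> X k" using uX k Kmap In by (auto intro!: csub_sum Xs)
      have ykX: "y k \<in> X k"
      proof -
        have "y k = u k - (\<Sum>j\<in>I. K k j (u j))" using uk by simp
        thus ?thesis using csub_diff[OF Xs[OF k]] uX k SX by simp
      qed
      have "u i = y i + (K i k (u k) + (\<Sum>j\<in>I. K i j (u j)))" using ue In[OF i] split[of "\<lambda>j. K i j (u j)"] by simp
      also have "K i k (u k) = K i k (y k) + K i k (\<Sum>j\<in>I. K k j (u j))"
        unfolding uk using Kadd[OF In[OF i] k] ykX SX by blast
      also have "K i k (\<Sum>j\<in>I. K k j (u j)) = (\<Sum>j\<in>I. K i k (K k j (u j)))"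
        by (rule add_sum[OF Xs[OF k] Kadd[OF In[OF i] k]]) (use Kmap k uX In in auto)
      finally show "u i = (y i + K i k (y k)) + (\<Sum>j\<in>I. M i j (u j))"
        by (simp add: M_def sum.distrib algebra_simps)
    qed
  qed
  show ?thesis unfolding solv_def
  proof (intro conjI)
    show "\<forall>y u u'. (\<forall>i<n. u i \<in> X i) \<longrightarrow> (\<forall>i<n. u' i \<in> X i) \<longrightarrow> (\<forall>i<n. u i = y i + (\<Sum>j<n. K i j (u j)))
      \<longrightarrow> (\<forall>i<n. u' i = y i + (\<Sum>j<n. K i j (u' j))) \<longrightarrow> (\<forall>i<n. u i = u' i)"
    proof (rule allI, rule allI, rule allI, intro impI)
      fix y u u' assume uX: "\<forall>i<n. u i \<in> X i" and u'X: "\<forall>i<n. u' i \<in> X i"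
        and ue: "\<forall>i<n. u i = y i + (\<Sum>j<n. K i j (u j))" and u'e: "\<forall>i<n. u' i = y i + (\<Sum>j<n. K i j (u' j))"
      have "\<forall>i\<in>I. u i \<in> X i" "\<forall>i\<in>I. u' i \<in> X i" using uX u'X In by blast+
      hence eqI: "\<forall>i\<in>I. u i = u' i"
        using C.unique[OF _ _ reduce[OF uX ue] reduce[OF u'X u'e]] by blast
      have "u k = u' k" using ukeq[OF uX ue] ukeq[OF u'X u'e] eqI by simp
      thus "\<forall>i<n. u i = u' i" using eqI by (auto simp: I_def)
    qed
    show "\<exists>C. \<forall>y. (\<forall>i<n. y i \<in> X i) \<longrightarrow> (\<exists>u. (\<forall>i<n. u i \<in> X i) \<and>
     (\<forall>i<n. u i = y i + (\<Sum>j<n. K i j (u j))) \<and> (\<Sum>i<n. norm (u i)) \<le> C * (\<Sum>i<n. norm (y i)))"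
    proof (rule exI, intro allI impI)
      fix y assume yX: "\<forall>i<n. y i \<in> X i"
      define y' where "y' = (\<lambda>i. y i + K i k (y k))"
      have y'X: "\<forall>i\<in>I. y' i \<in> X i" using yX Kmap k In Xs by (auto simp: y'_def intro!: csub_add)
      obtain u' where u'X: "\<forall>i\<in>I. u' i \<in> X i" and u'e: "\<forall>i\<in>I. u' i = y' i + (\<Sum>j\<in>I. M i j (u' j))"
        and u'b: "(\<Sum>i\<in>I. norm (u' i)) \<le> C * (\<Sum>i\<in>I. norm (y' i))"
        using Csol[OF y'X] by blast
      define S where "S = (\<Sum>j\<in>I. K k j (u' j))"
      have SX: "S \<in> X k" unfolding S_def using Kmap k u'X In by (auto intro!: csub_sum Xs)
      define u where "u = u'(k := y k + S)"
      have uI: "\<And>i. i \<in> I \<Longrightarrow> u i = u' i" using kI by (auto simp: u_def)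
      have uk: "u k = y k + S" by (simp add: u_def)
      have uX: "\<forall>i<n. u i \<in> X i"
      proof (intro allI impI)
        fix i assume i: "i < n"
        show "u i \<in> X i"
        proof (cases "i = k")
          case True then show ?thesis using uk yX SX k Xs by (auto intro!: csub_add)
        next
          case False then have "i \<in> I" using i by (simp add: I_def)
          then show ?thesis using uI u'X by simp
        qed
      qed
      have sumI: "(\<Sum>j\<in>I. f j (u j)) = (\<Sum>j\<in>I. f j (u' j))" for f :: "nat \<Rightarrow> 'a \<Rightarrow> 'a"
        by (rule sum.cong[OF refl]) (simp add: uI)
      have ue: "\<forall>i<n. u i = y i + (\<Sum>j<n. K i j (u j))"
      proof (intro allI impI)
        fix i assume i: "i < n"
        show "u i = y i + (\<Sum>j<n. K i j (u j))"
        proof (cases "i = k")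
          case True
          then show ?thesis using split[of "\<lambda>j. K k j (u j)"] Kii uk sumI[of "K k"]
            by (simp add: S_def)
        next
          case False then have iI: "i \<in> I" using i by (simp add: I_def)
          have "K i k (u k) = K i k (y k) + K i k S"
            unfolding uk using Kadd[OF i k] yX k SX by simp
          also have "K i k S = (\<Sum>j\<in>I. K i k (K k j (u' j)))"
            unfolding S_def by (rule add_sum[OF Xs[OF k] Kadd[OF i k]]) (use Kmap k u'X In in auto)
          finally have Kk: "K i k (u k) = K i k (y k) + (\<Sum>j\<in>I. K i k (K k j (u' j)))" .
          have "u i = y' i + (\<Sum>j\<in>I. M i j (u' j))" using uI[OF iI] u'e iI by simp
          also have "\<dots> = y i + (K i k (u k) + (\<Sum>j\<in>I. K i j (u j)))"
            unfolding Kk y'_def M_def sumI[of "K i"] by (simp add: sum.distrib algebra_simps)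
          also have "\<dots> = y i + (\<Sum>j<n. K i j (u j))" using split[of "\<lambda>j. K i j (u j)"] by simp
          finally show ?thesis .
        qed
      qed
      define Y where "Y = (\<Sum>i<n. norm (y i))"
      have Y0: "Y \<ge> 0" by (simp add: Y_def sum_nonneg)
      have ykY: "norm (y k) \<le> Y" unfolding Y_def by (rule member_le_sum) (use k in auto)
      have yIY: "(\<Sum>i\<in>I. norm (y i)) \<le> Y" unfolding Y_def by (rule sum_mono2) (auto simp: I_def)
      have "(\<Sum>i\<in>I. norm (y' i)) \<le> (\<Sum>i\<in>I. norm (y i) + B * norm (y k))"
        unfolding y'_def using Kb k yX In by (intro sum_mono order_trans[OF norm_triangle_ineq] add_left_mono) auto
      also have "\<dots> = (\<Sum>i\<in>I. norm (y i)) + real (card I) * (B * norm (y k))" by (simp add: sum.distrib)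
      also have "\<dots> \<le> Y + real n * (B * Y)"
      proof (rule add_mono[OF yIY], rule mult_mono)
        show "real (card I) \<le> real n" unfolding I_def using card_mono[of "{..<n}" "{..<n}-{k}"] by auto
        show "B * norm (y k) \<le> B * Y" using ykY B0 by (rule mult_left_mono)
      qed (use B0 in auto)
      finally have y'b: "(\<Sum>i\<in>I. norm (y' i)) \<le> (1 + real n * B) * Y" by (simp add: algebra_simps)
      define U where "U = (\<Sum>i\<in>I. norm (u' i))"
      have U0: "U \<ge> 0" by (simp add: U_def sum_nonneg)
      have Ub: "U \<le> C * ((1 + real n * B) * Y)"
        using u'b y'b C0 unfolding U_def by (meson mult_left_mono order_trans)
      have "norm S \<le> (\<Sum>j\<in>I. norm (K k j (u' j)))" unfolding S_def by (rule norm_sum)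
      also have "\<dots> \<le> (\<Sum>j\<in>I. B * norm (u' j))" using Kb k u'X In by (intro sum_mono) auto
      finally have Sb: "norm S \<le> B * U" by (simp add: U_def sum_distrib_left)
      have "(\<Sum>i<n. norm (u i)) = norm (u k) + U" unfolding splitr U_def
        using uI by (simp cong: sum.cong)
      also have "\<dots> \<le> (Y + B * U) + U" unfolding uk
        using norm_triangle_ineq[of "y k" S] ykY Sb by simp
      also have "\<dots> = Y + (B + 1) * U" by (simp add: algebra_simps)
      also have "\<dots> \<le> Y + (B + 1) * (C * ((1 + real n * B) * Y))"
        using Ub B0 by (intro add_left_mono mult_left_mono) auto
      also have "\<dots> = (1 + (B + 1) * C * (1 + real n * B)) * Y" by (simp add: algebra_simps)
      finally have ub: "(\<Sum>i<n. norm (u i)) \<le> (1 + (B + 1) * C * (1 + real n * B)) * (\<Sum>i<n. norm (y i))"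
        by (simp add: Y_def)
      show "\<exists>u. (\<forall>i<n. u i \<in> X i) \<and> (\<forall>i<n. u i = y i + (\<Sum>j<n. K i j (u j))) \<and>
          (\<Sum>i<n. norm (u i)) \<le> (1 + (B + 1) * C * (1 + real n * B)) * (\<Sum>i<n. norm (y i))"
        using uX ue ub by blast
    qed
  qed
qed

lemma cassini_weights:
  fixes b :: "nat \<Rightarrow> nat \<Rightarrow> real"
  assumes n2: "2 \<le> n" and b0: "\<And>i j. i<n \<Longrightarrow> j<n \<Longrightarrow> b i j \<ge> 0" and bd: "\<And>j. j<n \<Longrightarrow> b j j = 0"
   and prod: "\<And>i j. i<n \<Longrightarrow> j<n \<Longrightarrow> i \<noteq> j \<Longrightarrow> (\<Sum>l<n. b l i) * (\<Sum>l<n. b l j) < 1"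
  shows "\<exists>w. (\<forall>i<n. w i \<ge> 1) \<and> (\<forall>j<n. (\<Sum>i<n. w i * b i j) < w j)"
proof -
  define r where "r j = (\<Sum>l<n. b l j)" for j
  have r0: "j < n \<Longrightarrow> r j \<ge> 0" for j using b0 by (auto simp: r_def intro!: sum_nonneg)
  show ?thesis
  proof (cases "\<forall>j<n. r j < 1")
    case True
    then show ?thesis by (intro exI[of _ "\<lambda>_. 1"]) (simp add: r_def)
  next
    case False
    then obtain p where p: "p < n" "r p \<ge> 1" by (auto simp: not_less)
    define J where "J = {..<n} - {p}"
    have Jne: "J \<noteq> {}"
    proof
      assume "J = {}"
      hence "{..<n} \<subseteq> {p}" by (auto simp: J_def)
      hence "card {..<n} \<le> card {p}" by (intro card_mono) auto
      thus False using n2 by simp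
    qed
    have finJ: "finite J" by (simp add: J_def)
    define s where "s = Max (r ` J)"
    have "s \<in> r ` J" unfolding s_def using finJ Jne by (intro Max_in) auto
    then obtain j0 where j0: "j0 \<in> J" "s = r j0" by blast
    have rs: "j \<in> J \<Longrightarrow> r j \<le> s" for j using finJ by (auto simp: s_def)
    have s0: "s \<ge> 0" using j0 r0 by (auto simp: J_def)
    have ps: "r p * s < 1" using prod[of p j0] p j0 by (auto simp: J_def r_def)
    define t where "t = r p + (1 - r p * s) / (2 * (s + 1))"
    have tp: "t > r p" using ps s0 by (simp add: t_def)
    have t1: "t \<ge> 1" using tp p by simp
    have ts: "t * s < 1"
    proof -
      have "s / (2 * (s + 1)) < 1" using s0 by (simp add: field_simps)
      hence "s / (2 * (s + 1)) * (1 - r p * s) < 1 * (1 - r p * s)" using ps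
        by (intro mult_strict_right_mono) auto
      thus ?thesis unfolding t_def using s0 by (simp add: algebra_simps)
    qed
    define w where "w i = (if i = p then t else 1)" for i
    show ?thesis
    proof (intro exI conjI allI impI)
      fix i assume "i < n" then show "1 \<le> w i" using t1 by (simp add: w_def)
    next
      fix j assume j: "j < n"
      show "(\<Sum>i<n. w i * b i j) < w j"
      proof (cases "j = p")
        case True
        have "(\<Sum>i<n. w i * b i j) = (\<Sum>i<n. b i j)"
          using bd True by (intro sum.cong) (auto simp: w_def)
        also have "\<dots> = r p" using True by (simp add: r_def)
        finally show ?thesis using tp True by (simp add: w_def)
      next
        case False
        have "(\<Sum>i<n. w i * b i j) \<le> (\<Sum>i<n. t * b i j)"
          using t1 b0 j by (intro sum_mono mult_right_mono) (auto simp: w_def)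
        also have "\<dots> = t * r j" by (simp add: r_def sum_distrib_left)
        also have "\<dots> \<le> t * s" using rs[of j] j False t1 by (intro mult_left_mono) (auto simp: J_def)
        also have "\<dots> < 1" by (rule ts)
        finally show ?thesis using False by (simp add: w_def)
      qed
    qed
  qed
qed

locale opsetting =
  fixes n :: nat and X :: "nat \<Rightarrow> 'a::complex_normed_vector set" and D :: "nat \<Rightarrow> nat \<Rightarrow> 'a set"
    and A :: "nat \<Rightarrow> nat \<Rightarrow> 'a \<Rightarrow> 'a" and c d :: "nat \<Rightarrow> nat \<Rightarrow> real" and z :: complex
  assumes banach: "\<forall>i<n. banach_subspace (X i)"
    and lin: "\<forall>i<n. \<forall>j<n. lin_op (X j) (X i) (D i j) (A i j)"
    and dom: "\<forall>i<n. \<forall>j<n. i \<noteq> j \<longrightarrow> D j j \<subseteq> D i j"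
    and cd_nonneg: "\<forall>i<n. \<forall>j<n. i \<noteq> j \<longrightarrow> c i j \<ge> 0 \<and> d i j \<ge> 0"
    and rel_bdd: "\<forall>i<n. \<forall>j<n. i \<noteq> j \<longrightarrow>
                    (\<forall>x\<in>D j j. norm (A i j x) \<le> c i j * norm (A j j x) + d i j * norm x)"
    and ndiag: "\<forall>i<n. z \<notin> diag_spec X D A i"
begin

abbreviation R where "R i \<equiv> resolv (D i i) (A i i) z"
abbreviation T where "T i \<equiv> (\<lambda>x. z *\<^sub>C x - A i i x)"

lemma Xs: "i<n \<Longrightarrow> csubspace (X i)" using banach by (simp add: banach_subspace_def)
lemma Xc: "i<n \<Longrightarrow> complete (X i)" using banach by (simp add: banach_subspace_def)
lemma Ds: "i<n \<Longrightarrow> j<n \<Longrightarrow> csubspace (D i j)" using lin by (simp add: lin_op_def)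
lemma linij: "i<n \<Longrightarrow> j<n \<Longrightarrow> lin_op (X j) (X i) (D i j) (A i j)" using lin by blast
lemma DX: "i<n \<Longrightarrow> j<n \<Longrightarrow> x \<in> D i j \<Longrightarrow> x \<in> X j" using linij[of i j] unfolding lin_op_def by blast
lemma Amap: "i<n \<Longrightarrow> j<n \<Longrightarrow> x \<in> D i j \<Longrightarrow> A i j x \<in> X i" using linij[of i j] unfolding lin_op_def by blast
lemma Aadd: "i<n \<Longrightarrow> j<n \<Longrightarrow> \<forall>x\<in>D i j. \<forall>y\<in>D i j. A i j (x + y) = A i j x + A i j y"
  using lin by (simp add: lin_op_def)
lemma Ahom: "i<n \<Longrightarrow> j<n \<Longrightarrow> x \<in> D i j \<Longrightarrow> A i j (a *\<^sub>C x) = a *\<^sub>C A i j x"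
  using lin by (simp add: lin_op_def)
lemma Djj: "i<n \<Longrightarrow> j<n \<Longrightarrow> x \<in> D j j \<Longrightarrow> x \<in> D i j" using dom by (cases "i = j") auto

lemma binv: "i<n \<Longrightarrow> bdd_invertible norm (D i i) (X i) (T i)"
  using ndiag by (simp add: diag_spec_def op_spectrum_def)

lemma ex1: assumes i: "i<n" and y: "y \<in> X i" shows "\<exists>!x. x \<in> D i i \<and> T i x = y"
proof -
  have bij: "bij_betw (T i) (D i i) (X i)" using binv[OF i] by (simp add: bdd_invertible_def)
  then have "y \<in> T i ` D i i" using y by (simp add: bij_betw_def)
  then obtain x where "x \<in> D i i" "T i x = y" by blast
  moreover have "x' = x" if "x' \<in> D i i" "T i x' = y" for x'
    using bij that \<open>x \<in> D i i\<close> \<open>T i x = y\<close> by (auto simp: bij_betw_def inj_on_def)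
  ultimately show ?thesis by blast
qed

lemma R_prop: "i<n \<Longrightarrow> y \<in> X i \<Longrightarrow> R i y \<in> D i i \<and> T i (R i y) = y"
  unfolding resolv_def by (rule theI'[OF ex1])

lemma R_unique: assumes i: "i<n" and x: "x \<in> D i i" shows "R i (T i x) = x"
proof -
  have y: "T i x \<in> X i" using i x Amap DX Xs by (auto intro!: csub_diff csub_scaleC)
  show ?thesis using ex1[OF i y] R_prop[OF i y] x by blast
qed

lemma R_D: "i<n \<Longrightarrow> y \<in> X i \<Longrightarrow> R i y \<in> D i i" using R_prop by blast
lemma R_X: "i<n \<Longrightarrow> y \<in> X i \<Longrightarrow> R i y \<in> X i" using R_prop DX by blast
lemma R_T: "i<n \<Longrightarrow> y \<in> X i \<Longrightarrow> z *\<^sub>C R i y - A i i (R i y) = y" using R_prop by blast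

lemma R_add: assumes i: "i<n" and y: "y \<in> X i" and y': "y' \<in> X i"
  shows "R i (y + y') = R i y + R i y'"
proof -
  have D1: "R i y \<in> D i i" "R i y' \<in> D i i" using R_D i y y' by auto
  have "T i (R i y + R i y') = T i (R i y) + T i (R i y')"
    using Aadd[OF i i] D1 by (simp add: scaleC_add_right algebra_simps)
  also have "\<dots> = y + y'" using R_T i y y' by simp
  finally have "R i (y + y') = R i (T i (R i y + R i y'))" by simp
  also have "\<dots> = R i y + R i y'" using R_unique[OF i] D1 Ds[OF i i] by (simp add: csub_add)
  finally show ?thesis .
qed

lemma R_hom: assumes i: "i<n" and y: "y \<in> X i"
  shows "R i (a *\<^sub>C y) = a *\<^sub>C R i y"
proof -
  have D1: "R i y \<in> D i i" using R_D i y by auto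
  have "T i (a *\<^sub>C R i y) = a *\<^sub>C T i (R i y)"
    using Ahom[OF i i D1] by (simp add: scaleC_diff_right scaleC_left_commute)
  also have "\<dots> = a *\<^sub>C y" using R_T i y by simp
  finally have "R i (a *\<^sub>C y) = R i (T i (a *\<^sub>C R i y))" by simp
  also have "\<dots> = a *\<^sub>C R i y" using R_unique[OF i] D1 Ds[OF i i] by (simp add: csub_scaleC)
  finally show ?thesis .
qed

lemma R_bound1: "i<n \<Longrightarrow> \<exists>C\<ge>0. \<forall>y\<in>X i. norm (R i y) \<le> C * norm y"
proof -
  assume i: "i < n"
  have bij: "bij_betw (T i) (D i i) (X i)" and "\<exists>C. \<forall>y\<in>X i. norm (inv_into (D i i) (T i) y) \<le> C * norm y"
    using binv[OF i] by (auto simp: bdd_invertible_def)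
  then obtain C where C: "\<forall>y\<in>X i. norm (inv_into (D i i) (T i) y) \<le> C * norm y" by blast
  have "norm (R i y) \<le> max C 0 * norm y" if y: "y \<in> X i" for y
  proof -
    have "inv_into (D i i) (T i) y = inv_into (D i i) (T i) (T i (R i y))" using R_T[OF i y] by simp
    also have "\<dots> = R i y"
    proof -
      have "inj_on (T i) (D i i)" using bij by (simp add: bij_betw_def)
      thus ?thesis by (rule inv_into_f_f[OF _ R_D[OF i y]])
    qed
    finally have "norm (R i y) \<le> C * norm y" using C y by metis
    also have "\<dots> \<le> max C 0 * norm y" by (intro mult_right_mono) auto
    finally show ?thesis .
  qed
  thus ?thesis by (intro exI[of _ "max C 0"]) auto
qed

lemma R_bound: "\<exists>CR. \<forall>i<n. CR i \<ge> 0 \<and> (\<forall>y\<in>X i. norm (R i y) \<le> CR i * norm y)"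
proof -
  have "\<forall>i. \<exists>C. i < n \<longrightarrow> C \<ge> 0 \<and> (\<forall>y\<in>X i. norm (R i y) \<le> C * norm y)"
    using R_bound1 by blast
  from choice[OF this] show ?thesis by blast
qed

definition K where "K i j v = (if i = j then 0 else A i j (R j v))"

lemma K_map: "i<n \<Longrightarrow> j<n \<Longrightarrow> v \<in> X j \<Longrightarrow> K i j v \<in> X i"
  by (auto simp: K_def csub_0 Xs intro!: Amap Djj R_D)

lemma K_add: "i<n \<Longrightarrow> j<n \<Longrightarrow> \<forall>v\<in>X j. \<forall>v'\<in>X j. K i j (v + v') = K i j v + K i j v'"
  by (auto simp: K_def R_add R_D Djj Aadd)

lemma K_hom: "i<n \<Longrightarrow> j<n \<Longrightarrow> \<forall>a. \<forall>v\<in>X j. K i j (a *\<^sub>C v) = a *\<^sub>C K i j v"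
  by (auto simp: K_def R_hom R_D Djj Ahom)

lemma K_fin: assumes i: "i<n" and j: "j<n" shows "opnorm (X j) (K i j) < top"
proof (cases "i = j")
  case True
  have "opnorm (X j) (K i j) \<le> ennreal 0" by (rule opnorm_le) (auto simp: K_def True)
  thus ?thesis by (simp add: top.not_eq_extremum)
next
  case False
  obtain CR where CR: "\<forall>i<n. CR i \<ge> 0 \<and> (\<forall>y\<in>X i. norm (R i y) \<le> CR i * norm y)" using R_bound by blast
  define M where "M = c i j * (cmod z * CR j + 1) + d i j * CR j"
  have cd: "c i j \<ge> 0" "d i j \<ge> 0" using cd_nonneg i j False by auto
  have M0: "M \<ge> 0" using cd CR j by (simp add: M_def)
  have "opnorm (X j) (K i j) \<le> ennreal M"
  proof (rule opnorm_le[OF M0], intro ballI)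
    fix y assume y: "y \<in> X j"
    have RD: "R j y \<in> D j j" using R_D j y by auto
    have Ry: "norm (R j y) \<le> CR j * norm y" using CR j y by auto
    have "norm (K i j y) \<le> c i j * norm (A j j (R j y)) + d i j * norm (R j y)"
      using rel_bdd i j False RD by (simp add: K_def)
    also have "A j j (R j y) = z *\<^sub>C R j y - y" using R_T[OF j y] by (simp add: algebra_simps)
    also have "norm (z *\<^sub>C R j y - y) \<le> cmod z * norm (R j y) + norm y"
      using norm_triangle_ineq4[of "z *\<^sub>C R j y" y] by (simp add: norm_scaleC)
    also have "\<dots> \<le> cmod z * (CR j * norm y) + norm y" using Ry by (intro add_right_mono mult_left_mono) auto
    finally have "norm (K i j y) \<le> c i j * (cmod z * (CR j * norm y) + norm y) + d i j * norm (R j y)"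
      using cd by (smt (verit, best) mult_left_mono)
    also have "\<dots> \<le> c i j * (cmod z * (CR j * norm y) + norm y) + d i j * (CR j * norm y)"
      using Ry cd by (intro add_left_mono mult_left_mono) auto
    also have "\<dots> = M * norm y" by (simp add: M_def algebra_simps)
    finally show "norm (K i j y) \<le> M * norm y" .
  qed
  thus ?thesis using ennreal_less_top le_less_trans by blast
qed

definition b where "b i j = enn2real (opnorm (X j) (K i j))"

lemma b_nonneg: "b i j \<ge> 0" by (simp add: b_def)

lemma b_enn: "i<n \<Longrightarrow> j<n \<Longrightarrow> opnorm (X j) (K i j) = ennreal (b i j)"
  using K_fin by (simp add: b_def ennreal_enn2real)

lemma K_b: "i<n \<Longrightarrow> j<n \<Longrightarrow> v \<in> X j \<Longrightarrow> norm (K i j v) \<le> b i j * norm v"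
  unfolding b_def by (rule opnorm_bound[OF Xs K_add K_hom K_fin])

lemma b_diag: "j<n \<Longrightarrow> b j j = 0"
proof -
  assume j: "j < n"
  have "opnorm (X j) (K j j) \<le> ennreal 0" by (rule opnorm_le) (auto simp: K_def)
  thus ?thesis by (simp add: b_def)
qed

lemma col_sum_eq: "i<n \<Longrightarrow> col_sum n X D A i z = ennreal (\<Sum>l\<in>{..<n}-{i}. b l i)"
proof -
  assume i: "i < n"
  have "col_sum n X D A i z = (\<Sum>l\<in>{..<n}-{i}. ennreal (b l i))"
    unfolding col_sum_def
  proof (rule sum.cong[OF refl])
    fix l assume l: "l \<in> {..<n}-{i}"
    have "(\<lambda>y. A l i (R i y)) = K l i" using l by (auto simp: K_def)
    thus "opnorm (X i) (\<lambda>y. A l i (R i y)) = ennreal (b l i)" using b_enn l i by simp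
  qed
  also have "\<dots> = ennreal (\<Sum>l\<in>{..<n}-{i}. b l i)" by (rule sum_ennreal) (simp add: b_nonneg)
  finally show ?thesis .
qed

definition bm where "bm k i j = enn2real (opnorm (X j) (\<lambda>y. K i k (K k j y))) + (if i = j then 0 else b i j)"

lemma comp_fin: assumes "i<n" "k<n" "j<n" shows "opnorm (X j) (\<lambda>y. K i k (K k j y)) < top"
proof -
  have "opnorm (X j) (\<lambda>y. K i k (K k j y)) \<le> ennreal (b i k * b k j)"
  proof (rule opnorm_le, simp add: b_nonneg, intro ballI)
    fix y assume y: "y \<in> X j"
    have "norm (K i k (K k j y)) \<le> b i k * norm (K k j y)" using K_b K_map assms y by blast
    also have "\<dots> \<le> b i k * (b k j * norm y)" using K_b assms y b_nonneg by (intro mult_left_mono) auto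
    finally show "norm (K i k (K k j y)) \<le> b i k * b k j * norm y" by (simp add: mult.assoc)
  qed
  thus ?thesis using ennreal_less_top le_less_trans by blast
qed

lemma comp_b: assumes "i<n" "k<n" "j<n" "v \<in> X j"
  shows "norm (K i k (K k j v)) \<le> enn2real (opnorm (X j) (\<lambda>y. K i k (K k j y))) * norm v"
proof (rule opnorm_bound[OF Xs[OF assms(3)] _ _ comp_fin[OF assms(1-3)] assms(4)])
  show "\<forall>x\<in>X j. \<forall>y\<in>X j. K i k (K k j (x + y)) = K i k (K k j x) + K i k (K k j y)"
    using K_add K_map assms by auto
  show "\<forall>a. \<forall>x\<in>X j. K i k (K k j (a *\<^sub>C x)) = a *\<^sub>C K i k (K k j x)"
    using K_hom K_map assms by auto
qed

lemma Rstar_eq: assumes k: "k<n" and j: "j<n" "j \<noteq> k"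
  shows "Rstar n X D A k j z = ennreal (\<Sum>i\<in>{..<n}-{k}. bm k i j)"
proof -
  have "Rstar n X D A k j z = (\<Sum>i\<in>{..<n}-{k}. ennreal (bm k i j))"
    unfolding Rstar_def
  proof (rule sum.cong[OF refl])
    fix i assume i: "i \<in> {..<n}-{k}"
    have e1: "(\<lambda>y. A i k (R k (A k j (R j y)))) = (\<lambda>y. K i k (K k j y))" using i j by (auto simp: K_def)
    have e2: "opnorm (X j) (\<lambda>y. K i k (K k j y)) = ennreal (enn2real (opnorm (X j) (\<lambda>y. K i k (K k j y))))"
      using comp_fin i k j by (simp add: ennreal_enn2real)
    have e3: "i \<noteq> j \<Longrightarrow> opnorm (X j) (\<lambda>y. A i j (R j y)) = ennreal (b i j)"
    proof -
      assume "i \<noteq> j"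
      hence "(\<lambda>y. A i j (R j y)) = K i j" by (auto simp: K_def)
      thus ?thesis using b_enn i j by simp
    qed
    show "opnorm (X j) (\<lambda>y. A i k (R k (A k j (R j y)))) + (if i = j then 0 else opnorm (X j) (\<lambda>y. A i j (R j y)))
        = ennreal (bm k i j)"
      unfolding e1 bm_def using e2 e3 by (simp add: ennreal_plus b_nonneg)
  qed
  also have "\<dots> = ennreal (\<Sum>i\<in>{..<n}-{k}. bm k i j)" by (rule sum_ennreal) (simp add: bm_def b_nonneg)
  finally show ?thesis .
qed

end

context opsetting begin

lemma not_spec: assumes S: "solv n X K" shows "z \<notin> matrix_spectrum n X D A"
proof -
  define Dom where "Dom = prod_space n (\<lambda>i. D i i)"
  define Y where "Y = prod_space n X"
  define TT where "TT = (\<lambda>x i. if i < n then z *\<^sub>C x i - (\<Sum>j<n. A i j (x j)) else 0)"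
  define U where "U x = (\<lambda>i. z *\<^sub>C x i - A i i (x i))" for x
  obtain C where Csol: "\<And>y. \<forall>i<n. y i \<in> X i \<Longrightarrow> \<exists>u. (\<forall>i<n. u i \<in> X i) \<and>
     (\<forall>i<n. u i = y i + (\<Sum>j<n. K i j (u j))) \<and> (\<Sum>i<n. norm (u i)) \<le> C * (\<Sum>i<n. norm (y i))"
    using S unfolding solv_def by blast
  have uniq: "\<And>y u u'. \<forall>i<n. u i \<in> X i \<Longrightarrow> \<forall>i<n. u' i \<in> X i \<Longrightarrow> \<forall>i<n. u i = y i + (\<Sum>j<n. K i j (u j))
    \<Longrightarrow> \<forall>i<n. u' i = y i + (\<Sum>j<n. K i j (u' j)) \<Longrightarrow> \<forall>i<n. u i = u' i"
    using S unfolding solv_def by blast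
  obtain CR where CR: "\<forall>i<n. CR i \<ge> 0 \<and> (\<forall>y\<in>X i. norm (R i y) \<le> CR i * norm y)" using R_bound by blast
  define CRS where "CRS = (\<Sum>i<n. CR i)"
  have CRi: "CR i \<le> CRS" if "i < n" for i unfolding CRS_def
    by (rule member_le_sum) (use CR that in auto)
  have xD: "x \<in> Dom \<Longrightarrow> i < n \<Longrightarrow> x i \<in> D i i" for x i by (simp add: Dom_def prod_space_def)
  have x0: "x \<in> Dom \<Longrightarrow> \<not> i < n \<Longrightarrow> x i = 0" for x i by (simp add: Dom_def prod_space_def)
  have Ux: "U x i \<in> X i" if x: "x \<in> Dom" and i: "i < n" for x i
  proof -
    have xi: "x i \<in> D i i" using xD x i by blast
    have 1: "x i \<in> X i" using DX[OF i i xi] .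
    have 2: "A i i (x i) \<in> X i" using Amap[OF i i xi] .
    show ?thesis unfolding U_def by (rule csub_diff[OF Xs[OF i] csub_scaleC[OF Xs[OF i] 1] 2])
  qed
  have RU: "x \<in> Dom \<Longrightarrow> i < n \<Longrightarrow> R i (U x i) = x i" for x i
    unfolding U_def by (rule R_unique) (auto intro: xD)
  have TU: "TT x i = U x i - (\<Sum>j<n. K i j (U x j))" if x: "x \<in> Dom" and i: "i < n" for x i
  proof -
    have KU: "K i j (U x j) = (if i = j then 0 else A i j (x j))" if "j < n" for j
      using RU[OF x that] by (simp add: K_def)
    have "(\<Sum>j<n. K i j (U x j)) = (\<Sum>j\<in>{..<n}-{i}. A i j (x j))"
      unfolding sum_split_k[OF i, of "\<lambda>j. K i j (U x j)"] by (auto simp: K_def RU[OF x] intro!: sum.cong)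
    moreover have "(\<Sum>j<n. A i j (x j)) = A i i (x i) + (\<Sum>j\<in>{..<n}-{i}. A i j (x j))"
      by (rule sum_split_k[OF i])
    ultimately show ?thesis using i by (simp add: TT_def U_def algebra_simps)
  qed
  have construct: "\<exists>x\<in>Dom. TT x = y \<and> prod_norm n x \<le> CRS * C * prod_norm n y" if y: "y \<in> Y" for y
  proof -
    have yX: "\<forall>i<n. y i \<in> X i" and y0: "\<forall>i. \<not> i < n \<longrightarrow> y i = 0" using y by (auto simp: Y_def prod_space_def)
    obtain u where uX: "\<forall>i<n. u i \<in> X i" and ue: "\<forall>i<n. u i = y i + (\<Sum>j<n. K i j (u j))"
      and ub: "(\<Sum>i<n. norm (u i)) \<le> C * (\<Sum>i<n. norm (y i))" using Csol[OF yX] by blast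
    define x where "x i = (if i < n then R i (u i) else 0)" for i
    have xDom: "x \<in> Dom" using uX R_D by (auto simp: x_def Dom_def prod_space_def)
    have Uxu: "i < n \<Longrightarrow> U x i = u i" for i using R_T uX by (simp add: U_def x_def)
    have Txy: "TT x = y"
    proof
      fix i show "TT x i = y i"
      proof (cases "i < n")
        case True
        have "TT x i = u i - (\<Sum>j<n. K i j (u j))" using TU[OF xDom True] Uxu True by simp
        then show ?thesis using ue True by (simp add: algebra_simps)
      next
        case False then show ?thesis using y0 by (simp add: TT_def)
      qed
    qed
    have "prod_norm n x = (\<Sum>i<n. norm (R i (u i)))" by (simp add: prod_norm_def x_def)
    also have "\<dots> \<le> (\<Sum>i<n. CRS * norm (u i))"
    proof (rule sum_mono)
      fix i assume "i \<in> {..<n}"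
      hence i: "i < n" by simp
      have "norm (R i (u i)) \<le> CR i * norm (u i)" using CR i uX by blast
      also have "\<dots> \<le> CRS * norm (u i)" using CRi[OF i] by (rule mult_right_mono) simp
      finally show "norm (R i (u i)) \<le> CRS * norm (u i)" .
    qed
    also have "\<dots> = CRS * (\<Sum>i<n. norm (u i))" by (simp add: sum_distrib_left)
    also have "\<dots> \<le> CRS * (C * (\<Sum>i<n. norm (y i)))"
      using ub CR by (intro mult_left_mono) (auto simp: CRS_def intro!: sum_nonneg)
    finally have "prod_norm n x \<le> CRS * C * prod_norm n y" by (simp add: prod_norm_def mult.assoc)
    thus ?thesis using xDom Txy by blast
  qed
  have inj: "inj_on TT Dom"
  proof (rule inj_onI)
    fix x x' assume x: "x \<in> Dom" and x': "x' \<in> Dom" and e: "TT x = TT x'"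
    have "\<forall>i<n. U x i = U x' i"
    proof (rule uniq[of "U x" "U x'" "TT x"])
      show "\<forall>i<n. U x i \<in> X i" "\<forall>i<n. U x' i \<in> X i" using Ux x x' by auto
      show "\<forall>i<n. U x i = TT x i + (\<Sum>j<n. K i j (U x j))" using TU[OF x] by simp
      show "\<forall>i<n. U x' i = TT x i + (\<Sum>j<n. K i j (U x' j))" using TU[OF x'] e by simp
    qed
    thus "x = x'"
    proof -
      assume h: "\<forall>i<n. U x i = U x' i"
      show "x = x'"
      proof
        fix i show "x i = x' i"
          using h RU[OF x, of i] RU[OF x', of i] x0[OF x, of i] x0[OF x', of i] by (cases "i < n") auto
      qed
    qed
  qed
  have img: "TT ` Dom = Y"
  proof
    show "TT ` Dom \<subseteq> Y"
    proof
      fix t assume "t \<in> TT ` Dom"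
      then obtain x where x: "x \<in> Dom" and t: "t = TT x" by blast
      have "TT x i \<in> X i" if i: "i < n" for i
        unfolding TU[OF x i] using Ux[OF x] K_map i
        by (auto intro!: csub_diff csub_sum Xs)
      moreover have "TT x i = 0" if "\<not> i < n" for i using that by (simp add: TT_def)
      ultimately show "t \<in> Y" unfolding t Y_def prod_space_def by auto
    qed
    show "Y \<subseteq> TT ` Dom" using construct by blast
  qed
  have bnd: "\<forall>y\<in>Y. prod_norm n (inv_into Dom TT y) \<le> CRS * C * prod_norm n y"
  proof
    fix y assume y: "y \<in> Y"
    obtain x where x: "x \<in> Dom" "TT x = y" "prod_norm n x \<le> CRS * C * prod_norm n y"
      using construct[OF y] by blast
    have "inv_into Dom TT y = x" using inj x by (metis inv_into_f_f)
    thus "prod_norm n (inv_into Dom TT y) \<le> CRS * C * prod_norm n y" using x by simp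
  qed
  have "bdd_invertible (prod_norm n) Dom Y TT"
    unfolding bdd_invertible_def bij_betw_def using inj img bnd by blast
  thus ?thesis unfolding matrix_spectrum_def Dom_def Y_def TT_def by simp
qed

end

theorem theorem5p6:
  fixes n :: nat
    and X :: "nat \<Rightarrow> 'a::complex_normed_vector set"
    and D :: "nat \<Rightarrow> nat \<Rightarrow> 'a set"
    and A :: "nat \<Rightarrow> nat \<Rightarrow> 'a \<Rightarrow> 'a"
    and c d :: "nat \<Rightarrow> nat \<Rightarrow> real"
  assumes n2: "n \<ge> 2"
    and banach: "\<forall>i<n. banach_subspace (X i)"
    and lin: "\<forall>i<n. \<forall>j<n. lin_op (X j) (X i) (D i j) (A i j)"
    and closed_diag: "\<forall>i<n. closed_op (D i i) (A i i)"
    and dom: "\<forall>i<n. \<forall>j<n. i \<noteq> j \<longrightarrow> D j j \<subseteq> D i j"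
    and cd_nonneg: "\<forall>i<n. \<forall>j<n. i \<noteq> j \<longrightarrow> c i j \<ge> 0 \<and> d i j \<ge> 0"
    and rel_bdd: "\<forall>i<n. \<forall>j<n. i \<noteq> j \<longrightarrow>
                    (\<forall>x\<in>D j j. norm (A i j x) \<le> c i j * norm (A j j x) + d i j * norm x)"
    and c_sum: "\<forall>j<n. (\<Sum>i\<in>{..<n} - {j}. c i j) < 1"
  shows "matrix_spectrum n X D A \<subseteq> cassini_union n X D A \<and>
         matrix_spectrum n X D A \<subseteq> (\<Inter>k<n. Sstar n X D A k)"
proof -
  have main: "z \<in> cassini_union n X D A \<and> (\<forall>k<n. z \<in> Sstar n X D A k)"
    if zs: "z \<in> matrix_spectrum n X D A" for z
  proof (cases "\<exists>i<n. z \<in> diag_spec X D A i")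
    case True
    then obtain i where i: "i < n" "z \<in> diag_spec X D A i" by blast
    have cas: "z \<in> cassini_union n X D A"
    proof (cases "i = 0")
      case True
      have "z \<in> cassini n X D A 0 1" using i True by (simp add: cassini_def)
      thus ?thesis unfolding cassini_union_def using n2 by force
    next
      case False
      have "z \<in> cassini n X D A 0 i" using i by (simp add: cassini_def)
      thus ?thesis unfolding cassini_union_def using False i by force
    qed
    have "z \<in> Sstar n X D A k" if k: "k < n" for k
    proof (cases "k = i")
      case False
      have "z \<in> Sstar2 n X D A k i" using i by (simp add: Sstar2_def)
      thus ?thesis unfolding Sstar_def using False i by blast
    next
      case True
      define j where "j = (if i = 0 then 1 else (0::nat))"
      have j: "j < n" "j \<noteq> k" using n2 True by (auto simp: j_def)
      have "z \<in> Sstar2 n X D A k j" using i True by (simp add: Sstar2_def)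
      thus ?thesis unfolding Sstar_def using j by blast
    qed
    with cas show ?thesis by blast
  next
    case False
    interpret S: opsetting n X D A c d z
      by unfold_locales (use banach lin dom cd_nonneg rel_bdd False in auto)
    have rsum: "(\<Sum>l\<in>{..<n}-{i}. S.b l i) = (\<Sum>l<n. S.b l i)" if "i < n" for i
      using sum_split_k[OF that, of "\<lambda>l. S.b l i"] S.b_diag[OF that] by simp
    have cas: "z \<in> cassini_union n X D A"
    proof (rule ccontr)
      assume nc: "z \<notin> cassini_union n X D A"
      have prod: "(\<Sum>l<n. S.b l i) * (\<Sum>l<n. S.b l j) < 1" if ij: "i < n" "j < n" "i \<noteq> j" for i j
      proof -
        have gen: "(\<Sum>l<n. S.b l i) * (\<Sum>l<n. S.b l j) < 1" if ij': "i < j" "j < n" for i j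
        proof -
          have "z \<notin> cassini n X D A i j" using nc ij' unfolding cassini_union_def by auto
          hence "\<not> 1 \<le> col_sum n X D A i z * col_sum n X D A j z"
            using False ij' by (auto simp: cassini_def)
          hence "\<not> 1 \<le> ennreal ((\<Sum>l<n. S.b l i) * (\<Sum>l<n. S.b l j))"
            using ij' by (simp add: S.col_sum_eq rsum ennreal_mult' sum_nonneg S.b_nonneg)
          thus ?thesis by (simp add: ennreal_ge_1)
        qed
        show ?thesis
        proof (cases "i < j")
          case True then show ?thesis using gen ij by blast
        next
          case False then have "j < i" using ij by simp
          then show ?thesis using gen[of j i] ij by (simp add: mult.commute)
        qed
      qed
      obtain w where w1: "\<forall>i<n. w i \<ge> 1" and wc: "\<forall>j<n. (\<Sum>i<n. w i * S.b i j) < w j"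
        using cassini_weights[OF n2, of S.b] S.b_nonneg S.b_diag prod by blast
      have fl: "(\<Sum>i<n. w i * S.b i j) / w j < 1" if "j \<in> {..<n}" for j
      proof -
        have "w j \<ge> 1" "(\<Sum>i<n. w i * S.b i j) < w j" using w1 wc that by auto
        thus ?thesis by (simp add: divide_less_eq)
      qed
      obtain q where q: "0 \<le> q" "q < 1" "\<forall>j\<in>{..<n}. (\<Sum>i<n. w i * S.b i j) / w j \<le> q"
        using max_q[of "{..<n}" "\<lambda>j. (\<Sum>i<n. w i * S.b i j) / w j", OF _ fl] by auto
      have "contr {..<n} X S.K S.b w q"
      proof
        show "\<And>j. j \<in> {..<n} \<Longrightarrow> (\<Sum>i<n. w i * S.b i j) \<le> q * w j"
        proof -
          fix j assume "j \<in> {..<n}"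
          then have "(\<Sum>i<n. w i * S.b i j) / w j \<le> q" "w j \<ge> 1" using q w1 by auto
          thus "(\<Sum>i<n. w i * S.b i j) \<le> q * w j" by (simp add: divide_le_eq)
        qed
      qed (use S.Xs S.Xc S.K_map S.K_add S.K_b w1 q in auto)
      hence "solv n X S.K" by (rule contr_solv)
      hence "z \<notin> matrix_spectrum n X D A" by (rule S.not_spec)
      thus False using zs by blast
    qed
    have sst: "z \<in> Sstar n X D A k" if k: "k < n" for k
    proof (rule ccontr)
      assume ns: "z \<notin> Sstar n X D A k"
      have Mcol: "(\<Sum>i\<in>{..<n}-{k}. S.bm k i j) < 1" if j: "j \<in> {..<n}-{k}" for j
      proof -
        have "z \<notin> Sstar2 n X D A k j" using ns j unfolding Sstar_def by blast
        hence "\<not> 1 \<le> Rstar n X D A k j z" using False k j by (auto simp: Sstar2_def)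
        hence "\<not> 1 \<le> ennreal (\<Sum>i\<in>{..<n}-{k}. S.bm k i j)" using S.Rstar_eq k j by simp
        thus ?thesis by (simp add: ennreal_ge_1)
      qed
      define B where "B = (\<Sum>i<n. \<Sum>j<n. S.b i j)"
      have bB: "S.b i j \<le> B" if "i < n" "j < n" for i j
      proof -
        have "S.b i j \<le> (\<Sum>j<n. S.b i j)" by (rule member_le_sum) (use that S.b_nonneg in auto)
        also have "\<dots> \<le> B" unfolding B_def
          by (rule member_le_sum[of i "{..<n}" "\<lambda>i. \<Sum>j<n. S.b i j"]) (use that S.b_nonneg in \<open>auto intro: sum_nonneg\<close>)
        finally show ?thesis .
      qed
      have B0: "B \<ge> 0" unfolding B_def by (intro sum_nonneg) (simp add: S.b_nonneg)
      have "solv n X S.K"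
      proof (rule elim_solv[OF k S.Xs S.Xc S.K_map S.K_add B0 _ _ _ Mcol])
        show "norm (S.K i j v) \<le> B * norm v" if "i < n" "j < n" "v \<in> X j" for i j v
          using S.K_b[OF that] bB[OF that(1,2)] by (meson mult_right_mono norm_ge_zero order_trans)
        show "S.K i i v = 0" for i v by (simp add: S.K_def)
        show "norm (S.K i k (S.K k j v) + S.K i j v) \<le> S.bm k i j * norm v"
          if ij: "i \<in> {..<n}-{k}" "j \<in> {..<n}-{k}" and v: "v \<in> X j" for i j v
        proof -
          have "norm (S.K i k (S.K k j v) + S.K i j v) \<le> norm (S.K i k (S.K k j v)) + norm (S.K i j v)"
            by (rule norm_triangle_ineq)
          also have "norm (S.K i k (S.K k j v)) \<le> enn2real (opnorm (X j) (\<lambda>y. S.K i k (S.K k j y))) * norm v"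
            using S.comp_b ij k v by auto
          also have "norm (S.K i j v) \<le> (if i = j then 0 else S.b i j) * norm v"
            using S.K_b[of i j v] ij v by (auto simp: S.K_def)
          finally show ?thesis by (simp add: S.bm_def algebra_simps)
        qed
      qed (auto)
      hence "z \<notin> matrix_spectrum n X D A" by (rule S.not_spec)
      thus False using zs by blast
    qed
    show ?thesis using cas sst by blast
  qed
  show ?thesis using main by blast
qed

end
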